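(* Let $\mathcal{F}\subseteq\mathcal{P}(\omega)$ be a free filter and let $D\subseteq(-1,1)^\omega$ be a countable set. Then there exists a homeomorphism $h\colon Q\to Q$ of $Q=[-1,1]^\omega$ such that $h[D]$ is in general position, $h[(-1,1)^\omega]=(-1,1)^\omega$ and $h[K_\mathcal{F}]=K_\mathcal{F}$.
   Context: A filter on $\omega$ is free if it contains all cofinite sets. $Q=[-1,1]^\omega$ has the product topology. $K_\mathcal{F}=\{f\in Q:\forall m\in\omega\ \{n\in\omega:|f(n)|<2^{-m}\}\in\mathcal{F}\}$. A set $X\subseteq Q$ is in general position if for all $x,y\in X$ with $x\ne y$ one has $x(n)\ne y(n)$ for every $n\in\omega$. *)

theory Defs
  imports "HOL-Analysis.Analysis"
begin

definition is_filter_on_nat :: "nat set set \<Rightarrow> bool" where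
  "is_filter_on_nat F \<longleftrightarrow> UNIV \<in> F \<and> {} \<notin> F \<and>
     (\<forall>A B. A \<in> F \<longrightarrow> A \<subseteq> B \<longrightarrow> B \<in> F) \<and>
     (\<forall>A B. A \<in> F \<longrightarrow> B \<in> F \<longrightarrow> A \<inter> B \<in> F)"

definition free_filter :: "nat set set \<Rightarrow> bool" where
  "free_filter F \<longleftrightarrow> is_filter_on_nat F \<and> (\<forall>A. finite (UNIV - A) \<longrightarrow> A \<in> F)"

definition Qcube :: "(nat \<Rightarrow> real) set" where
  "Qcube = PiE UNIV (\<lambda>_. {-1..1})"

definition Qtop :: "(nat \<Rightarrow> real) topology" where
  "Qtop = subtopology (product_topology (\<lambda>_. euclideanreal) UNIV) Qcube"

definition Qopen :: "(nat \<Rightarrow> real) set" where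
  "Qopen = PiE UNIV (\<lambda>_. {-1<..<1})"

definition K_filter :: "nat set set \<Rightarrow> (nat \<Rightarrow> real) set" where
  "K_filter F = {f \<in> Qcube. \<forall>m::nat. {n. \<bar>f n\<bar> < (1/2) ^ m} \<in> F}"

definition general_position :: "(nat \<Rightarrow> real) set \<Rightarrow> bool" where
  "general_position X \<longleftrightarrow> (\<forall>x\<in>X. \<forall>y\<in>X. x \<noteq> y \<longrightarrow> (\<forall>n. x n \<noteq> y n))"

end

theory Submission imports Defs "HOL-Complex_Analysis.Complex_Analysis" begin

lemma powser_zeros_finite:
  fixes d :: "nat \<Rightarrow> real"
  assumes bd: "\<And>j. \<bar>d j\<bar> \<le> B" and nz: "d k \<noteq> 0"
  shows "finite {t \<in> {0..1/2}. (\<Sum>j. d j * t^j) = 0}"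
proof (rule ccontr)
  assume inf: "infinite {t \<in> {0..1/2}. (\<Sum>j. d j * t^j) = 0}"
  define Z where "Z = {t \<in> {0..1/2}. (\<Sum>j. d j * t^j) = 0}"
  define F where "F = Abs_fps (\<lambda>j. complex_of_real (d j))"
  have summ: "summable (\<lambda>j. d j * r^j)" if "0 \<le> r" "r < 1" for r :: real
  proof (rule summable_comparison_test')
    show "summable (\<lambda>j. B * r^j)" using that by (intro summable_mult summable_geometric) auto
    show "norm (d j * r^j) \<le> B * r^j" for j
      using bd[of j] that by (simp add: abs_mult mult_right_mono)
  qed
  have conv: "fps_conv_radius F \<ge> 1"
    unfolding fps_conv_radius_def
  proof (rule conv_radius_geI_ex')
    fix r :: real assume "0 < r" "ereal r < 1"
    then have "summable (\<lambda>j. d j * r^j)" using summ by auto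
    then have "summable (\<lambda>j. complex_of_real (d j * r^j))"
      using summable_of_real by blast
    then show "summable (\<lambda>n. fps_nth F n * of_real r ^ n)"
      by (simp add: F_def)
  qed
  define g where "g = eval_fps F"
  have hol: "g holomorphic_on ball 0 1"
    unfolding g_def
    by (rule holomorphic_on_eval_fps) (use conv in \<open>simp add: ball_eball_mono one_ereal_def\<close>)
  have gre: "g (of_real t) = 0" if "t \<in> Z" for t
  proof -
    have t: "0 \<le> t" "t < 1" "(\<Sum>j. d j * t^j) = 0" using that by (auto simp: Z_def)
    have "g (of_real t) = (\<Sum>j. complex_of_real (d j * t^j))"
      by (simp add: g_def eval_fps_def F_def)
    also have "\<dots> = of_real (\<Sum>j. d j * t^j)"
      using suminf_of_real[OF summ[OF t(1,2)]] by (metis (no_types) of_real_mult of_real_power)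
    finally show ?thesis using t by simp
  qed
  define Z' where "Z' = complex_of_real ` Z"
  have "infinite Z'" unfolding Z'_def using inf Z_def
    by (metis finite_imageD inj_onI of_real_eq_iff)
  moreover have Zc: "Z' \<subseteq> cball 0 (1/2)" by (auto simp: Z'_def Z_def)
  ultimately obtain \<xi> where xi: "\<xi> islimpt Z'"
    using bounded_infinite_imp_islimpt[of Z' Z'] bounded_cball bounded_subset by blast
  have "\<xi> \<in> cball 0 (1/2)"
    using xi Zc closed_cball closed_limpt islimpt_subset by blast
  then have xib: "\<xi> \<in> ball 0 1" by auto
  have g0: "g w = 0" if "w \<in> ball 0 1" for w
    by (rule analytic_continuation[OF hol open_ball connected_ball _ xib xi])
       (use Zc that gre in \<open>auto simp: Z'_def\<close>)
  have "g has_fps_expansion 0"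
    unfolding has_fps_expansion_0_iff eventually_nhds
    by (rule exI[of _ "ball 0 1"]) (use g0 in auto)
  moreover have "g has_fps_expansion F"
  proof -
    have "(0::ereal) < 1" by simp
    then have "0 < fps_conv_radius F" using conv by (rule less_le_trans)
    then show ?thesis unfolding g_def by (rule eval_fps_has_fps_expansion)
  qed
  ultimately have "F = 0" using fps_expansion_unique_complex by blast
  then have "fps_nth F k = 0" by simp
  then show False using nz by (simp add: F_def)
qed


definition phi :: "real \<Rightarrow> real \<Rightarrow> real" where "phi c v = v + c * (1 - v^2)"

lemma phi_strict:
  assumes "\<bar>c\<bar> \<le> 1/4" "-1 \<le> v" "v < w" "w \<le> 1"
  shows "phi c v < phi c w"
proof -
  have "\<bar>c * (w + v)\<bar> \<le> 1/4 * 2"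
    unfolding abs_mult using assms by (intro mult_mono) auto
  then have "0 < (w - v) * (1 - c * (w + v))" using assms by (intro mult_pos_pos) auto
  moreover have "phi c w - phi c v = (w - v) * (1 - c * (w + v))"
    by (simp add: phi_def power2_eq_square algebra_simps)
  ultimately show ?thesis by simp
qed

lemma phi_inj:
  assumes "\<bar>c\<bar> \<le> 1/4" "\<bar>v\<bar> \<le> 1" "\<bar>w\<bar> \<le> 1" "phi c v = phi c w"
  shows "v = w"
  using phi_strict[of c v w] phi_strict[of c w v] assms
  by (cases v w rule: linorder_cases) (auto simp: abs_le_iff)

lemma phi_pm [simp]: "phi c 1 = 1" "phi c (-1) = -1"
  by (simp_all add: phi_def)

lemma phi_cube:
  assumes "\<bar>c\<bar> \<le> 1/4" "\<bar>v\<bar> \<le> 1"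
  shows "\<bar>phi c v\<bar> \<le> 1"
proof -
  have v: "-1 \<le> v" "v \<le> 1" using assms by auto
  have "phi c (-1) \<le> phi c v"
    using phi_strict[of c "-1" v] assms v by (cases "v = -1") auto
  moreover have "phi c v \<le> phi c 1"
    using phi_strict[of c v 1] assms v by (cases "v = 1") auto
  ultimately show ?thesis by simp
qed

lemma phi_open_iff:
  assumes "\<bar>c\<bar> \<le> 1/4" "\<bar>v\<bar> \<le> 1"
  shows "\<bar>phi c v\<bar> < 1 \<longleftrightarrow> \<bar>v\<bar> < 1"
proof
  assume "\<bar>v\<bar> < 1"
  then have "-1 < v" "v < 1" by auto
  then show "\<bar>phi c v\<bar> < 1"
    using phi_strict[of c "-1" v] phi_strict[of c v 1] assms by auto
next
  assume a: "\<bar>phi c v\<bar> < 1"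
  show "\<bar>v\<bar> < 1"
  proof (rule ccontr)
    assume "\<not> \<bar>v\<bar> < 1"
    then have "v = 1 \<or> v = -1" using assms by auto
    then show False using a by auto
  qed
qed

lemma phi_surj:
  assumes "\<bar>c\<bar> \<le> 1/4" "\<bar>y\<bar> \<le> 1"
  shows "\<exists>v. \<bar>v\<bar> \<le> 1 \<and> phi c v = y"
proof -
  have "continuous_on {-1..1} (phi c)" unfolding phi_def by (intro continuous_intros)
  then obtain v where "v \<ge> -1" "v \<le> 1" "phi c v = y"
    using IVT'[of "phi c" "-1" y 1] assms by (auto simp: abs_le_iff)
  then show ?thesis by (intro exI[of _ v]) auto
qed

lemma phi_close:
  assumes "\<bar>v\<bar> \<le> 1"
  shows "\<bar>phi c v - v\<bar> \<le> \<bar>c\<bar>"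
proof -
  have "v^2 \<le> 1" using assms by (simp add: abs_square_le_1)
  then have "\<bar>1 - v^2\<bar> \<le> 1" by auto
  then have "\<bar>c\<bar> * \<bar>1 - v^2\<bar> \<le> \<bar>c\<bar> * 1" by (intro mult_left_mono) auto
  then show ?thesis by (simp add: phi_def abs_mult)
qed

lemma Qcube_iff: "x \<in> Qcube \<longleftrightarrow> (\<forall>n. \<bar>x n\<bar> \<le> 1)"
  by (auto simp: Qcube_def PiE_UNIV_domain abs_le_iff)

lemma Qopen_iff: "x \<in> Qopen \<longleftrightarrow> (\<forall>n. \<bar>x n\<bar> < 1)"
  by (auto simp: Qopen_def PiE_UNIV_domain abs_less_iff)

lemma Qopen_sub: "Qopen \<subseteq> Qcube"
  by (auto simp: Qopen_iff Qcube_iff less_imp_le)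

lemma K_sub: "K_filter F \<subseteq> Qcube"
  by (auto simp: K_filter_def)

lemma K_perturb:
  assumes fF: "free_filter F" and x: "x \<in> K_filter F" and y: "y \<in> Qcube"
    and close: "\<And>n. \<bar>y n - x n\<bar> \<le> \<delta> n"
    and fin: "\<And>m. finite {n. \<delta> n \<ge> (1/2)^m}"
  shows "y \<in> K_filter F"
  unfolding K_filter_def
proof (intro CollectI conjI allI y)
  fix m :: nat
  have filt: "is_filter_on_nat F" and cof: "\<And>A. finite (UNIV - A) \<Longrightarrow> A \<in> F"
    using fF by (auto simp: free_filter_def)
  have A: "{n. \<bar>x n\<bar> < (1/2)^Suc m} \<in> F" using x unfolding K_filter_def by blast
  have "UNIV - {n. \<delta> n < (1/2)^Suc m} = {n. \<delta> n \<ge> (1/2)^Suc m}" by auto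
  then have B: "{n. \<delta> n < (1/2)^Suc m} \<in> F" using cof fin by metis
  have AB: "{n. \<bar>x n\<bar> < (1/2)^Suc m} \<inter> {n. \<delta> n < (1/2)^Suc m} \<in> F"
    using filt A B unfolding is_filter_on_nat_def by blast
  have "{n. \<bar>x n\<bar> < (1/2)^Suc m} \<inter> {n. \<delta> n < (1/2)^Suc m} \<subseteq> {n. \<bar>y n\<bar> < (1/2)^m}"
  proof
    fix n assume "n \<in> {n. \<bar>x n\<bar> < (1/2)^Suc m} \<inter> {n. \<delta> n < (1/2)^Suc m}"
    then have "\<bar>x n\<bar> < (1/2)^Suc m" "\<delta> n < (1/2)^Suc m" by auto
    moreover have "\<bar>y n\<bar> \<le> \<bar>x n\<bar> + \<bar>y n - x n\<bar>" by linarith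
    ultimately have "\<bar>y n\<bar> < 2 * (1/2)^Suc m" using close[of n] by linarith
    then show "n \<in> {n. \<bar>y n\<bar> < (1/2)^m}" by simp
  qed
  then show "{n. \<bar>y n\<bar> < (1/2)^m} \<in> F"
    using filt AB unfolding is_filter_on_nat_def by blast
qed

definition goodmap :: "nat set set \<Rightarrow> ((nat \<Rightarrow> real) \<Rightarrow> (nat \<Rightarrow> real)) \<Rightarrow> bool" where
  "goodmap F h \<longleftrightarrow> continuous_on Qcube h \<and> inj_on h Qcube \<and> h ` Qcube = Qcube \<and>
     (\<forall>x\<in>Qcube. h x \<in> Qopen \<longleftrightarrow> x \<in> Qopen) \<and>
     (\<forall>x\<in>Qcube. h x \<in> K_filter F \<longleftrightarrow> x \<in> K_filter F)"

lemma goodmap_comp: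
  assumes f: "goodmap F f" and g: "goodmap F g"
  shows "goodmap F (g \<circ> f)"
proof -
  have f1: "continuous_on Qcube f" "inj_on f Qcube" "f ` Qcube = Qcube"
    and f2: "\<And>x. x \<in> Qcube \<Longrightarrow> f x \<in> Qopen \<longleftrightarrow> x \<in> Qopen"
    and f3: "\<And>x. x \<in> Qcube \<Longrightarrow> f x \<in> K_filter F \<longleftrightarrow> x \<in> K_filter F"
    using f unfolding goodmap_def by blast+
  have g1: "continuous_on Qcube g" "inj_on g Qcube" "g ` Qcube = Qcube"
    and g2: "\<And>x. x \<in> Qcube \<Longrightarrow> g x \<in> Qopen \<longleftrightarrow> x \<in> Qopen"
    and g3: "\<And>x. x \<in> Qcube \<Longrightarrow> g x \<in> K_filter F \<longleftrightarrow> x \<in> K_filter F"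
    using g unfolding goodmap_def by blast+
  have fx: "f x \<in> Qcube" if "x \<in> Qcube" for x using f1(3) that by blast
  have "continuous_on Qcube (g \<circ> f)"
    by (rule continuous_on_compose[OF f1(1)]) (simp add: f1(3) g1(1))
  moreover have "inj_on (g \<circ> f) Qcube"
    by (rule comp_inj_on[OF f1(2)]) (simp add: f1(3) g1(2))
  moreover have "(g \<circ> f) ` Qcube = Qcube"
    using f1(3) g1(3) by (metis image_comp)
  moreover have "\<forall>x\<in>Qcube. (g \<circ> f) x \<in> Qopen \<longleftrightarrow> x \<in> Qopen"
    using f2 g2 fx by simp
  moreover have "\<forall>x\<in>Qcube. (g \<circ> f) x \<in> K_filter F \<longleftrightarrow> x \<in> K_filter F"
    using f3 g3 fx by simp
  ultimately show ?thesis unfolding goodmap_def by blast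
qed

lemma compact_Qcube: "compact Qcube"
proof -
  have "compactin (product_topology (\<lambda>_. euclideanreal) UNIV) Qcube"
    unfolding Qcube_def by (simp add: compactin_PiE)
  then show ?thesis by (simp add: euclidean_product_topology)
qed

lemma image_preserve:
  assumes "A \<subseteq> Qcube" "h ` Qcube = Qcube" "\<forall>x\<in>Qcube. h x \<in> A \<longleftrightarrow> x \<in> A"
  shows "h ` A = A"
proof
  show "h ` A \<subseteq> A" using assms by auto
  show "A \<subseteq> h ` A"
  proof
    fix y assume "y \<in> A"
    then have "y \<in> h ` Qcube" using assms by auto
    then obtain x where "x \<in> Qcube" "y = h x" by auto
    then show "y \<in> h ` A" using assms \<open>y \<in> A\<close> by auto
  qed
qed

lemma goodmap_final:
  assumes "goodmap F h"
  shows "homeomorphic_map Qtop Qtop h \<and> h ` Qopen = Qopen \<and> h ` K_filter F = K_filter F"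
proof (intro conjI)
  have c: "continuous_on Qcube h" "inj_on h Qcube" "h ` Qcube = Qcube"
    using assms by (auto simp: goodmap_def)
  obtain g where g: "homeomorphism Qcube Qcube h g"
    using homeomorphism_compact[OF compact_Qcube c(1) c(3) c(2)] by blast
  have "Qtop = top_of_set Qcube" by (simp add: Qtop_def euclidean_product_topology)
  moreover have "homeomorphic_maps (top_of_set Qcube) (top_of_set Qcube) h g"
    using g by (force simp: homeomorphic_maps_def homeomorphism_def)
  ultimately show "homeomorphic_map Qtop Qtop h"
    using homeomorphic_map_maps by metis
  show "h ` Qopen = Qopen"
    using image_preserve[OF Qopen_sub c(3)] assms by (auto simp: goodmap_def)
  show "h ` K_filter F = K_filter F"
    using image_preserve[OF K_sub c(3)] assms by (auto simp: goodmap_def)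
qed


definition P :: "real \<Rightarrow> (nat \<Rightarrow> real) \<Rightarrow> real" where
  "P t x = (\<Sum>j. t^(Suc j) * x (Suc j))"

definition h1 :: "real \<Rightarrow> (nat \<Rightarrow> real) \<Rightarrow> (nat \<Rightarrow> real)" where
  "h1 t x = (\<lambda>n. if n = 0 then phi (P t x / 4) (x 0) else x n)"

lemma geo_Suc:
  fixes t :: real
  assumes "0 \<le> t" "t \<le> 1/2"
  shows "summable (\<lambda>j. t^(Suc j))" "(\<Sum>j. t^(Suc j)) \<le> 1"
proof -
  have s: "summable (\<lambda>j. t^j)" using assms by (intro summable_geometric) auto
  then show "summable (\<lambda>j. t^(Suc j))" by (simp add: summable_mult)
  have "(\<Sum>j. t^(Suc j)) = t * (\<Sum>j. t^j)" using suminf_mult[OF s, of t] by simp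
  also have "\<dots> = t / (1 - t)" using assms by (simp add: suminf_geometric)
  also have "\<dots> \<le> 1" using assms by (simp add: divide_simps)
  finally show "(\<Sum>j. t^(Suc j)) \<le> 1" .
qed

lemma P_summable:
  assumes "0 \<le> t" "t \<le> 1/2" "x \<in> Qcube"
  shows "summable (\<lambda>j. t^(Suc j) * x (Suc j))" "\<bar>P t x\<bar> \<le> 1"
proof -
  have b: "norm (t^(Suc j) * x (Suc j)) \<le> t^(Suc j)" for j
    using assms by (auto simp: Qcube_iff abs_mult intro: mult_left_le)
  show s: "summable (\<lambda>j. t^(Suc j) * x (Suc j))"
    by (rule summable_comparison_test'[OF geo_Suc(1)[OF assms(1,2)], where N=0]) (rule b)
  have sn: "summable (\<lambda>j. norm (t^(Suc j) * x (Suc j)))"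
    by (rule summable_comparison_test'[OF geo_Suc(1)[OF assms(1,2)], where N=0]) (metis b norm_ge_zero real_norm_def abs_of_nonneg)
  have "\<bar>P t x\<bar> \<le> (\<Sum>j. norm (t^(Suc j) * x (Suc j)))"
    unfolding P_def using summable_norm[OF sn] by simp
  also have "\<dots> \<le> (\<Sum>j. t^(Suc j))"
    by (rule suminf_le[OF b sn geo_Suc(1)[OF assms(1,2)]])
  also have "\<dots> \<le> 1" using geo_Suc assms by simp
  finally show "\<bar>P t x\<bar> \<le> 1" .
qed

lemma coord_cont [continuous_intros]: "continuous_on S (\<lambda>x::nat \<Rightarrow> real. x i)"
  by (rule continuous_on_subset[OF continuous_on_product_coordinates]) auto

lemma P_cont:
  assumes "0 \<le> t" "t \<le> 1/2"
  shows "continuous_on Qcube (P t)"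
proof -
  have ul: "uniform_limit Qcube (\<lambda>n x. \<Sum>i<n. t^(Suc i) * x (Suc i))
      (\<lambda>x. suminf (\<lambda>i. t^(Suc i) * x (Suc i))) sequentially"
    by (rule Weierstrass_m_test[OF _ geo_Suc(1)[OF assms]])
       (use assms in \<open>auto simp: Qcube_iff abs_mult intro: mult_left_le\<close>)
  have "continuous_on Qcube (\<lambda>x. suminf (\<lambda>i. t^(Suc i) * x (Suc i)))"
    by (rule uniform_limit_theorem[OF _ ul]) (auto intro!: always_eventually continuous_intros)
  then show ?thesis unfolding P_def[abs_def] by simp
qed

lemma h1_tail: "h1 t x (Suc j) = x (Suc j)"
  by (simp add: h1_def)

lemma P_h1: "P t (h1 t x) = P t x"
  by (simp add: P_def h1_tail)

lemma P_upd0: "P t (x(0 := v)) = P t x"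
  by (simp add: P_def)

lemma h1_good:
  assumes fF: "free_filter F" and t: "0 \<le> t" "t \<le> 1/2"
  shows "goodmap F (h1 t)"
proof -
  have cb: "\<bar>P t x / 4\<bar> \<le> 1/4" if "x \<in> Qcube" for x
    using P_summable(2)[OF t that] by simp
  have inQ: "h1 t x \<in> Qcube" if "x \<in> Qcube" for x
    using that phi_cube[OF cb[OF that]] by (auto simp: Qcube_iff h1_def)
  have cont: "continuous_on Qcube (h1 t)"
    unfolding h1_def
  proof (rule continuous_on_coordinatewise_then_product)
    fix i
    show "continuous_on Qcube (\<lambda>x. if i = 0 then phi (P t x / 4) (x 0) else x i)"
    proof (cases "i = 0")
      case True
      then show ?thesis using P_cont[OF t] unfolding phi_def
        by (simp, intro continuous_intros) auto
    qed (simp add: continuous_intros)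
  qed
  have inj: "inj_on (h1 t) Qcube"
  proof (rule inj_onI)
    fix x y assume x: "x \<in> Qcube" and y: "y \<in> Qcube" and e: "h1 t x = h1 t y"
    have tl: "x (Suc j) = y (Suc j)" for j using e h1_tail by metis
    then have "P t x = P t y" by (simp add: P_def)
    moreover have "phi (P t x / 4) (x 0) = phi (P t y / 4) (y 0)"
      using fun_cong[OF e, of 0] by (simp add: h1_def)
    ultimately have "x 0 = y 0" using phi_inj[OF cb[OF x]] x y by (auto simp: Qcube_iff)
    with tl show "x = y" by (metis not0_implies_Suc ext)
  qed
  have surj: "h1 t ` Qcube = Qcube"
  proof
    show "h1 t ` Qcube \<subseteq> Qcube" using inQ by auto
    show "Qcube \<subseteq> h1 t ` Qcube"
    proof
      fix y assume y: "y \<in> Qcube"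
      obtain v where v: "\<bar>v\<bar> \<le> 1" "phi (P t y / 4) v = y 0"
        using phi_surj[OF cb[OF y]] y by (auto simp: Qcube_iff)
      have "y(0 := v) \<in> Qcube" using y v by (auto simp: Qcube_iff)
      moreover have "h1 t (y(0 := v)) = y"
        using v by (auto simp: h1_def P_upd0)
      ultimately show "y \<in> h1 t ` Qcube" by (metis imageI)
    qed
  qed
  have op: "h1 t x \<in> Qopen \<longleftrightarrow> x \<in> Qopen" if x: "x \<in> Qcube" for x
  proof -
    have "(\<forall>n. \<bar>h1 t x n\<bar> < 1) \<longleftrightarrow> (\<forall>n. \<bar>x n\<bar> < 1)"
    proof -
      have "\<bar>h1 t x 0\<bar> < 1 \<longleftrightarrow> \<bar>x 0\<bar> < 1"
        using phi_open_iff[OF cb[OF x]] x by (auto simp: h1_def Qcube_iff)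
      moreover have "h1 t x (Suc n) = x (Suc n)" for n by (rule h1_tail)
      ultimately show ?thesis by (metis not0_implies_Suc)
    qed
    then show ?thesis by (simp add: Qopen_iff)
  qed
  have fin: "finite {n. (if n = 0 then 2 else 0::real) \<ge> (1/2)^m}" for m
  proof -
    have p: "\<not> (1/2::real)^m \<le> 0" by (simp add: not_le)
    have "{n. (if n = 0 then 2 else 0::real) \<ge> (1/2)^m} \<subseteq> {0}"
    proof
      fix n assume "n \<in> {n. (if n = 0 then 2 else 0::real) \<ge> (1/2)^m}"
      then show "n \<in> {0}" using p by (cases "n = 0") auto
    qed
    then show ?thesis by (rule finite_subset) auto
  qed
  have close: "\<bar>h1 t x n - x n\<bar> \<le> (if n = 0 then 2 else 0)" if x: "x \<in> Qcube" for x n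
  proof (cases "n = 0")
    case True
    have "\<bar>h1 t x 0\<bar> \<le> 1" using inQ[OF x] by (simp add: Qcube_iff)
    moreover have "\<bar>x 0\<bar> \<le> 1" using x by (simp add: Qcube_iff)
    ultimately show ?thesis using True by simp
  qed (simp add: h1_def)
  have K: "h1 t x \<in> K_filter F \<longleftrightarrow> x \<in> K_filter F" if x: "x \<in> Qcube" for x
  proof
    assume "h1 t x \<in> K_filter F"
    then show "x \<in> K_filter F"
      by (rule K_perturb[OF fF _ x _ fin]) (use close[OF x] in \<open>simp add: abs_minus_commute\<close>)
  next
    assume "x \<in> K_filter F"
    then show "h1 t x \<in> K_filter F"
      by (rule K_perturb[OF fF _ inQ[OF x] close[OF x] fin])
  qed
  show ?thesis unfolding goodmap_def using cont inj surj op K by blast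
qed


definition h2 :: "real \<Rightarrow> (nat \<Rightarrow> real) \<Rightarrow> (nat \<Rightarrow> real)" where
  "h2 s x = (\<lambda>n. if n = 0 then x 0 else phi (s * (1/2)^n * x 0) (x n))"

lemma h2_good:
  assumes fF: "free_filter F" and s: "0 \<le> s" "s \<le> 1/4"
  shows "goodmap F (h2 s)"
proof -
  have cb: "\<bar>s * (1/2)^n * a\<bar> \<le> (1/2)^n" if "\<bar>a\<bar> \<le> 1" for a :: real and n
  proof -
    have "\<bar>s * (1/2)^n * a\<bar> = s * ((1/2)^n * \<bar>a\<bar>)" using s by (simp add: abs_mult)
    also have "\<dots> \<le> 1 * ((1/2)^n * 1)" using s that
      by (intro mult_mono) (auto intro: mult_left_le)
    finally show ?thesis by simp
  qed
  have cb4: "\<bar>s * (1/2)^n * a\<bar> \<le> 1/4" if "\<bar>a\<bar> \<le> 1" for a :: real and n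
  proof -
    have "\<bar>s * (1/2)^n * a\<bar> = s * ((1/2)^n * \<bar>a\<bar>)" using s by (simp add: abs_mult)
    also have "\<dots> \<le> 1/4 * 1" using s that
      by (intro mult_mono mult_le_one) (auto simp: power_le_one)
    finally show ?thesis by simp
  qed
  have inQ: "h2 s x \<in> Qcube" if "x \<in> Qcube" for x
    using that phi_cube[OF cb4] by (auto simp: Qcube_iff h2_def)
  have cont: "continuous_on Qcube (h2 s)"
    unfolding h2_def phi_def
  proof (intro continuous_on_coordinatewise_then_product)
    fix i
    show "continuous_on Qcube (\<lambda>x. if i = 0 then x 0
               else x i + s * (1 / 2) ^ i * x 0 * (1 - (x i)\<^sup>2))"
      by (cases "i = 0") (simp_all add: continuous_intros)
  qed
  have inj: "inj_on (h2 s) Qcube"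
  proof (rule inj_onI)
    fix x y assume x: "x \<in> Qcube" and y: "y \<in> Qcube" and e: "h2 s x = h2 s y"
    have 0: "x 0 = y 0" using fun_cong[OF e, of 0] by (simp add: h2_def)
    have "x n = y n" for n
    proof (cases "n = 0")
      case False
      then have "phi (s * (1/2)^n * x 0) (x n) = phi (s * (1/2)^n * x 0) (y n)"
        using fun_cong[OF e, of n] 0 by (simp add: h2_def)
      moreover have "\<bar>x 0\<bar> \<le> 1" "\<bar>x n\<bar> \<le> 1" "\<bar>y n\<bar> \<le> 1" using x y by (auto simp: Qcube_iff)
      ultimately show ?thesis using phi_inj[OF cb4] by blast
    qed (simp add: 0)
    then show "x = y" by auto
  qed
  have surj: "h2 s ` Qcube = Qcube"
  proof
    show "h2 s ` Qcube \<subseteq> Qcube" using inQ by auto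
    show "Qcube \<subseteq> h2 s ` Qcube"
    proof
      fix y assume y: "y \<in> Qcube"
      have "\<forall>n. \<exists>v. \<bar>v\<bar> \<le> 1 \<and> phi (s * (1/2)^n * y 0) v = y n"
        using phi_surj[OF cb4] y by (auto simp: Qcube_iff)
      then obtain v where v: "\<And>n. \<bar>v n\<bar> \<le> 1" "\<And>n. phi (s * (1/2)^n * y 0) (v n) = y n"
        by metis
      define x where "x = v(0 := y 0)"
      have "x \<in> Qcube" using y v by (auto simp: Qcube_iff x_def)
      moreover have "h2 s x = y"
        using v by (auto simp: h2_def x_def)
      ultimately show "y \<in> h2 s ` Qcube" by (metis imageI)
    qed
  qed
  have op: "h2 s x \<in> Qopen \<longleftrightarrow> x \<in> Qopen" if x: "x \<in> Qcube" for x
  proof -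
    have "\<bar>h2 s x n\<bar> < 1 \<longleftrightarrow> \<bar>x n\<bar> < 1" for n
      using phi_open_iff[OF cb4] x by (auto simp: h2_def Qcube_iff)
    then show ?thesis by (simp add: Qopen_iff)
  qed
  have fin: "finite {n. (1/2::real)^n \<ge> (1/2)^m}" for m
  proof -
    have "{n. (1/2::real)^n \<ge> (1/2)^m} \<subseteq> {..m}"
      by (auto simp: power_decreasing_iff)
    then show ?thesis by (rule finite_subset) auto
  qed
  have close: "\<bar>h2 s x n - x n\<bar> \<le> (1/2)^n" if x: "x \<in> Qcube" for x n
  proof (cases "n = 0")
    case False
    then have "\<bar>h2 s x n - x n\<bar> \<le> \<bar>s * (1/2)^n * x 0\<bar>"
      using phi_close x by (auto simp: h2_def Qcube_iff)
    also have "\<dots> \<le> (1/2)^n" using cb x by (auto simp: Qcube_iff)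
    finally show ?thesis .
  qed (simp add: h2_def)
  have K: "h2 s x \<in> K_filter F \<longleftrightarrow> x \<in> K_filter F" if x: "x \<in> Qcube" for x
  proof
    assume "h2 s x \<in> K_filter F"
    then show "x \<in> K_filter F"
      by (rule K_perturb[OF fF _ x _ fin]) (use close[OF x] in \<open>simp add: abs_minus_commute\<close>)
  next
    assume "x \<in> K_filter F"
    then show "h2 s x \<in> K_filter F"
      by (rule K_perturb[OF fF _ inQ[OF x] close[OF x] fin])
  qed
  show ?thesis unfolding goodmap_def using cont inj surj op K by blast
qed


definition cx :: "(nat \<Rightarrow> real) \<Rightarrow> nat \<Rightarrow> real" where
  "cx x j = (case j of 0 \<Rightarrow> x 0 | Suc i \<Rightarrow> (1 - (x 0)^2) / 4 * x (Suc i))"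

lemma h1_sums:
  assumes "0 \<le> t" "t \<le> 1/2" "x \<in> Qcube"
  shows "(\<lambda>j. cx x j * t^j) sums (h1 t x 0)"
proof -
  have "(\<lambda>j. t^(Suc j) * x (Suc j)) sums P t x"
    unfolding P_def using P_summable(1)[OF assms] by (rule summable_sums)
  then have "(\<lambda>j. (1 - (x 0)^2) / 4 * (t^(Suc j) * x (Suc j))) sums ((1 - (x 0)^2) / 4 * P t x)"
    by (rule sums_mult)
  then have "(\<lambda>j. cx x (Suc j) * t^(Suc j)) sums ((1 - (x 0)^2) / 4 * P t x)"
    by (simp add: cx_def mult_ac)
  then have "(\<lambda>j. cx x j * t^j) sums ((1 - (x 0)^2) / 4 * P t x + cx x 0 * t^0)"
    using sums_Suc_iff[of "\<lambda>j. cx x j * t^j" "(1 - (x 0)^2) / 4 * P t x"] by blast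
  moreover have "(1 - (x 0)^2) / 4 * P t x + cx x 0 * t^0 = h1 t x 0"
    by (simp add: cx_def h1_def phi_def algebra_simps)
  ultimately show ?thesis by simp
qed

lemma cx_bound:
  assumes "x \<in> Qcube" shows "\<bar>cx x j\<bar> \<le> 1"
proof (cases j)
  case 0 then show ?thesis using assms by (simp add: cx_def Qcube_iff)
next
  case (Suc i)
  have a: "\<bar>x 0\<bar> \<le> 1" "\<bar>x (Suc i)\<bar> \<le> 1" using assms by (auto simp: Qcube_iff)
  then have x2: "(x 0)^2 \<le> 1" by (simp add: abs_square_le_1)
  have x3: "0 \<le> (x 0)^2" by simp
  have "0 \<le> (1 - (x 0)^2) / 4" using x2 by simp
  moreover have "1 - (x 0)^2 \<le> 4" using x3 by linarith
  then have "(1 - (x 0)^2) / 4 \<le> 1" by simp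
  ultimately have "\<bar>(1 - (x 0)^2) / 4\<bar> \<le> 1" by simp
  then have "\<bar>(1 - (x 0)^2) / 4\<bar> * \<bar>x (Suc i)\<bar> \<le> 1 * 1"
    using a by (intro mult_mono) auto
  then show ?thesis using Suc by (simp add: cx_def abs_mult)
qed

lemma cx_inj:
  assumes "x \<in> Qopen" "y \<in> Qopen" "\<And>j. cx x j = cx y j"
  shows "x = y"
proof -
  have 0: "x 0 = y 0" using assms(3)[of 0] by (simp add: cx_def)
  have "\<bar>x 0\<bar> < 1" using assms(1) by (simp add: Qopen_iff)
  then have "(x 0)^2 < 1" by (simp add: abs_square_less_1)
  then have nz: "(1 - (x 0)^2) / 4 \<noteq> 0" by simp
  have "x n = y n" for n
  proof (cases n)
    case (Suc i)
    then show ?thesis using assms(3)[of n] 0 nz by (simp add: cx_def)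
  qed (simp add: 0)
  then show ?thesis by auto
qed

lemma lin_fin:
  fixes a b :: real
  assumes "a \<noteq> 0 \<or> b \<noteq> 0"
  shows "finite {s. a + s * b = 0}"
proof (cases "b = 0")
  case True then show ?thesis using assms by simp
next
  case False
  then have "{s. a + s * b = 0} \<subseteq> {- a / b}" by (auto simp: field_simps)
  then show ?thesis by (rule finite_subset) auto
qed

lemma avoid_countable:
  fixes a b :: real
  assumes "a < b" "countable B"
  obtains t where "a < t" "t < b" "t \<notin> B"
proof -
  have "\<not> {a<..<b} \<subseteq> B"
    using assms uncountable_open_interval countable_subset by blast
  then obtain t where "t \<in> {a<..<b}" "t \<notin> B" by blast
  then show ?thesis using that by auto
qed

theorem mainTheorem12:
  fixes F :: "nat set set" and D :: "(nat \<Rightarrow> real) set"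
  assumes "free_filter F"
    and "D \<subseteq> Qopen"
    and "countable D"
  shows "\<exists>h. homeomorphic_map Qtop Qtop h \<and> general_position (h ` D)
           \<and> h ` Qopen = Qopen \<and> h ` K_filter F = K_filter F"
proof -
  define PR where "PR = {p \<in> D \<times> D. fst p \<noteq> snd p}"
  have cPR: "countable PR" unfolding PR_def
    using assms(3) by (intro countable_subset[OF _ countable_SIGMA[of D "\<lambda>_. D"]]) auto
  have DQ: "x \<in> Qcube" if "x \<in> D" for x using that assms(2) Qopen_sub by auto
  define Bad where "Bad = (\<Union>p\<in>PR. {t \<in> {0..1/2}. (\<Sum>j. (cx (fst p) j - cx (snd p) j) * t^j) = 0})"
  have "countable Bad" unfolding Bad_def
  proof (intro countable_UN[OF cPR] countable_finite)
    fix p assume p: "p \<in> PR"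
    then have x: "fst p \<in> D" "snd p \<in> D" "fst p \<noteq> snd p" by (auto simp: PR_def)
    have "\<exists>k. cx (fst p) k - cx (snd p) k \<noteq> 0"
    proof (rule ccontr)
      assume "\<not> (\<exists>k. cx (fst p) k - cx (snd p) k \<noteq> 0)"
      then have "\<And>j. cx (fst p) j = cx (snd p) j" by simp
      then have "fst p = snd p" using cx_inj[of "fst p" "snd p"] x assms(2) by blast
      then show False using x by simp
    qed
    then obtain k where k: "cx (fst p) k - cx (snd p) k \<noteq> 0" by blast
    show "finite {t \<in> {0..1/2}. (\<Sum>j. (cx (fst p) j - cx (snd p) j) * t^j) = 0}"
    proof (rule powser_zeros_finite[of _ 2 k])
      fix j
      show "\<bar>cx (fst p) j - cx (snd p) j\<bar> \<le> 2"
        using cx_bound[OF DQ[OF x(1)], of j] cx_bound[OF DQ[OF x(2)], of j] by linarith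
    qed (rule k)
  qed
  then obtain t where t: "0 < t" "t < 1/2" "t \<notin> Bad"
    using avoid_countable[of 0 "1/2"] by auto
  have sep0: "h1 t x 0 \<noteq> h1 t y 0" if "x \<in> D" "y \<in> D" "x \<noteq> y" for x y
  proof
    assume e: "h1 t x 0 = h1 t y 0"
    have "(\<lambda>j. cx x j * t^j - cx y j * t^j) sums (h1 t x 0 - h1 t y 0)"
      using t by (intro sums_diff h1_sums DQ that) auto
    then have "(\<lambda>j. (cx x j - cx y j) * t^j) sums 0" using e by (simp add: algebra_simps)
    then have "(\<Sum>j. (cx x j - cx y j) * t^j) = 0" by (simp add: sums_iff)
    moreover have "(x, y) \<in> PR" using that by (simp add: PR_def)
    ultimately have "t \<in> (\<lambda>p. {t \<in> {0..1/2}. (\<Sum>j. (cx (fst p) j - cx (snd p) j) * t^j) = 0}) (x, y)"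
      using t by simp
    then have "t \<in> Bad" unfolding Bad_def using \<open>(x, y) \<in> PR\<close> by (rule UN_I[rotated])
    then show False using t by simp
  qed
  have g1: "goodmap F (h1 t)" using h1_good[OF assms(1)] t by simp
  have zO: "h1 t x \<in> Qopen" if "x \<in> D" for x
    using g1 that DQ assms(2) unfolding goodmap_def by blast
  define Bad2 where "Bad2 = (\<Union>q\<in>PR \<times> UNIV. {s. snd q \<noteq> 0 \<and>
      phi (s * (1/2)^(snd q) * h1 t (fst (fst q)) 0) (h1 t (fst (fst q)) (snd q)) =
      phi (s * (1/2)^(snd q) * h1 t (snd (fst q)) 0) (h1 t (snd (fst q)) (snd q))})"
  have cPRU: "countable (PR \<times> (UNIV :: nat set))" using cPR by (intro countable_SIGMA) auto
  have "countable Bad2" unfolding Bad2_def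
  proof (rule countable_UN[OF cPRU countable_finite])
    fix q :: "((nat \<Rightarrow> real) \<times> (nat \<Rightarrow> real)) \<times> nat"
    assume q: "q \<in> PR \<times> UNIV"
    obtain x y n where q': "q = ((x, y), n)" by (metis prod.collapse)
    have xy: "x \<in> D" "y \<in> D" "x \<noteq> y" using q q' by (auto simp: PR_def)
    define z where "z = h1 t x"
    define w where "w = h1 t y"
    have zw0: "z 0 \<noteq> w 0" using sep0[OF xy] by (simp add: z_def w_def)
    have zn: "\<bar>z n\<bar> < 1" using zO[OF xy(1)] by (simp add: z_def Qopen_iff)
    show "finite {s. snd q \<noteq> 0 \<and>
      phi (s * (1/2)^(snd q) * h1 t (fst (fst q)) 0) (h1 t (fst (fst q)) (snd q)) =
      phi (s * (1/2)^(snd q) * h1 t (snd (fst q)) 0) (h1 t (snd (fst q)) (snd q))}"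
    proof (rule finite_subset)
      show "{s. snd q \<noteq> 0 \<and>
        phi (s * (1/2)^(snd q) * h1 t (fst (fst q)) 0) (h1 t (fst (fst q)) (snd q)) =
        phi (s * (1/2)^(snd q) * h1 t (snd (fst q)) 0) (h1 t (snd (fst q)) (snd q))}
        \<subseteq> {s. (z n - w n) + s * ((1/2)^n * (z 0 * (1 - (z n)^2) - w 0 * (1 - (w n)^2))) = 0}"
        by (auto simp: q' z_def[symmetric] w_def[symmetric] phi_def algebra_simps)
      show "finite {s. (z n - w n) + s * ((1/2)^n * (z 0 * (1 - (z n)^2) - w 0 * (1 - (w n)^2))) = 0}"
      proof (rule lin_fin)
        show "z n - w n \<noteq> 0 \<or> (1/2)^n * (z 0 * (1 - (z n)^2) - w 0 * (1 - (w n)^2)) \<noteq> 0"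
        proof (cases "z n = w n")
          case True
          have "(z n)^2 < 1" using zn by (simp add: abs_square_less_1)
          then have "(1 - (z n)^2) * (z 0 - w 0) \<noteq> 0" using zw0 by simp
          then have "(1/2)^n * ((1 - (z n)^2) * (z 0 - w 0)) \<noteq> 0" by simp
          moreover have "(1/2)^n * ((1 - (z n)^2) * (z 0 - w 0)) =
              (1/2)^n * (z 0 * (1 - (z n)^2) - w 0 * (1 - (w n)^2))" using True by (simp add: algebra_simps)
          ultimately show ?thesis by simp
        qed simp
      qed
    qed
  qed
  then obtain s where s: "0 < s" "s < 1/4" "s \<notin> Bad2"
    using avoid_countable[of 0 "1/4"] by auto
  have g2: "goodmap F (h2 s)" using h2_good[OF assms(1)] s by simp
  define h where "h = h2 s \<circ> h1 t"
  have gh: "goodmap F h" unfolding h_def by (rule goodmap_comp[OF g1 g2])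
  have gp: "general_position (h ` D)"
    unfolding general_position_def
  proof (intro ballI impI allI)
    fix a b n assume a: "a \<in> h ` D" and b: "b \<in> h ` D" and ab: "a \<noteq> b"
    obtain x where x: "x \<in> D" "a = h x" using a by auto
    obtain y where y: "y \<in> D" "b = h y" using b by auto
    have xy: "x \<noteq> y" using ab x y by auto
    show "a n \<noteq> b n"
    proof (cases "n = 0")
      case True
      then show ?thesis using sep0[OF x(1) y(1) xy] x y by (simp add: h_def h2_def)
    next
      case False
      have "((x, y), n) \<in> PR \<times> UNIV" using x y xy by (simp add: PR_def)
      have "phi (s * (1/2)^n * h1 t x 0) (h1 t x n) \<noteq> phi (s * (1/2)^n * h1 t y 0) (h1 t y n)"
      proof
        assume e: "phi (s * (1/2)^n * h1 t x 0) (h1 t x n) = phi (s * (1/2)^n * h1 t y 0) (h1 t y n)"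
        have "s \<in> (\<lambda>q. {s. snd q \<noteq> 0 \<and>
          phi (s * (1/2)^(snd q) * h1 t (fst (fst q)) 0) (h1 t (fst (fst q)) (snd q)) =
          phi (s * (1/2)^(snd q) * h1 t (snd (fst q)) 0) (h1 t (snd (fst q)) (snd q))}) ((x, y), n)"
          using e False by simp
        then have "s \<in> Bad2" unfolding Bad2_def using \<open>((x, y), n) \<in> PR \<times> UNIV\<close> by (rule UN_I[rotated])
        then show False using s(3) by simp
      qed
      then show ?thesis using False x y by (simp add: h_def h2_def)
    qed
  qed
  show ?thesis using goodmap_final[OF gh] gp by blast
qed

end
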